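(* Let $m,n,k\in\mathbb{N}$ and $\delta\le 0$. Then \[ \sum_{i=0}^{n}(-1)^{i}\binom{n}{i}\frac{(k)_i}{(m+n)_i}\,\frac{\prod_{j=k-1}^{k+i-2}(1-j\delta)}{\prod_{j=m}^{m+i-1}(1-j\delta)} =\frac{(m+n-k)_n\prod_{j=m+k}^{m+n+k-1}(1-j\delta)}{(m+n)_n\prod_{j=m}^{m+n-1}(1-j\delta)}. \]
   Context: For $x\in\mathbb{R}$ and $k\in\mathbb{N}$, $(x)_k=x(x-1)\cdots(x-k+1)$ with $(x)_0=1$. Empty products equal $1$. *)

theory Defs
  imports Complex_Main
begin

definition falling :: "real \<Rightarrow> nat \<Rightarrow> real" where
  "falling x k = (\<Prod>i<k. x - real i)"

end

theory Submission imports Defs begin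

definition pr :: "real \<Rightarrow> real \<Rightarrow> nat \<Rightarrow> real" where
  "pr d a l = (\<Prod>t<l. 1 - (a + real t) * d)"
definition AA :: "real \<Rightarrow> nat \<Rightarrow> real" where
  "AA m p = (\<Prod>s<p. m + 1 + real s)"
definition ff :: "real \<Rightarrow> real \<Rightarrow> real \<Rightarrow> nat \<Rightarrow> nat \<Rightarrow> real" where
  "ff d m k n i = (-1)^i * real (n choose i) * (falling k i * pr d (k - 1) i)
      * AA m (n - i) * pr d (m + real i) (n - i)"

lemma pr_Suc: "pr d a (Suc l) = pr d a l * (1 - (a + real l) * d)"
  by (simp add: pr_def)
lemma pr_Suc_front: "pr d a (Suc l) = (1 - a * d) * pr d (a + 1) l"
  unfolding pr_def by (subst prod.lessThan_Suc_shift) (simp add: algebra_simps)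
lemma pr_add: "pr d a (i + p) = pr d a i * pr d (a + real i) p"
  by (induction p) (simp_all add: pr_Suc algebra_simps pr_def)
lemma falling_Suc: "falling x (Suc q) = falling x q * (x - real q)"
  by (simp add: falling_def)
lemma falling_Suc_front: "falling x (Suc q) = x * falling (x - 1) q"
  unfolding falling_def by (subst prod.lessThan_Suc_shift) (simp add: algebra_simps)
lemma falling_add: "falling x (i + p) = falling x i * falling (x - real i) p"
  by (induction p) (simp_all add: falling_Suc algebra_simps falling_def)
lemma AA_Suc: "AA m (Suc p) = AA m p * (m + 1 + real p)"
  by (simp add: AA_def)
lemma falling_AA: "falling (m + real p) p = AA m p"
proof (induction p)
  case 0 then show ?case by (simp add: falling_def AA_def)
next
  case (Suc p)
  have "falling (m + real (Suc p)) (Suc p) = (m + real (Suc p)) * falling (m + real p) p"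
    by (subst falling_Suc_front) (simp add: algebra_simps)
  then show ?case using Suc by (simp add: AA_Suc algebra_simps)
qed

lemma step0:
  "ff d m k (Suc n) 0 - (m + real n + 1 - k) * (1 - (m + real n + k) * d) * ff d m k n 0
   = ff d m k n 0 * (k - 0) * (1 - (k + 0 - 1) * d)"
  by (simp add: ff_def AA_Suc pr_Suc falling_def pr_def[of d _ 0]) (simp add: algebra_simps)

definition GG where "GG d m k n i = ff d m k n i * (k - real i) * (1 - (k + real i - 1) * d)"

lemma stepSuc:
  assumes "l \<le> n"
  shows "ff d m k (Suc n) (Suc l) - (m + real n + 1 - k) * (1 - (m + real n + k) * d) * ff d m k n (Suc l)
   = GG d m k n (Suc l) - GG d m k n l"
proof (cases "l = n")
  case True
  then show ?thesis
    by (simp add: GG_def ff_def AA_def pr_def[of d _ 0] falling_Suc pr_Suc binomial_eq_0)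
next
  case False
  then obtain p where n: "n = l + Suc p" using assms by (metis add_Suc_right le_add_diff_inverse le_neq_implies_less less_imp_Suc_add)
  define c where "c = real (n choose l)"
  define c1 where "c1 = real (n choose Suc l)"
  have bin: "real (Suc n choose Suc l) = c + c1" unfolding c_def c1_def by simp
  have key: "real (Suc l) * c1 = real (Suc p) * c"
  proof -
    have "Suc l * (n choose Suc l) = n * ((n - 1) choose l)" using Suc_times_binomial[of l "l+p"] n by simp
    also have "\<dots> = (n - l) * (n choose l)" by (rule binomial_absorb_comp[symmetric])
    finally show ?thesis unfolding c_def c1_def using n by (metis of_nat_mult diff_add_inverse)
  qed
  have e1: "Suc n - Suc l = Suc p" "n - Suc l = p" "n - l = Suc p" using n by auto
  define X where "X = falling k l * pr d (k - 1) l * AA m p * pr d (m + real (Suc l)) p"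
  have A1: "ff d m k (Suc n) (Suc l) = (-1)^Suc l * (c + c1) * (falling k l * (k - real l) * (pr d (k-1) l * (1 - (k - 1 + real l) * d)))
      * (AA m p * (m + 1 + real p)) * (pr d (m + real (Suc l)) p * (1 - (m + real (Suc l) + real p) * d))"
    unfolding ff_def bin[symmetric] e1 by (simp add: falling_Suc pr_Suc AA_Suc)
  have A2: "ff d m k n (Suc l) = (-1)^Suc l * c1 * (falling k l * (k - real l) * (pr d (k-1) l * (1 - (k - 1 + real l) * d)))
      * AA m p * pr d (m + real (Suc l)) p"
    unfolding ff_def c1_def e1 by (simp add: falling_Suc pr_Suc AA_Suc)
  have A3: "ff d m k n l = (-1)^l * c * (falling k l * pr d (k-1) l)
      * (AA m p * (m + 1 + real p)) * ((1 - (m + real l) * d) * pr d (m + real (Suc l)) p)"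
  proof -
    have pe: "pr d (m + real l + 1) p = pr d (m + real (Suc l)) p" by (rule arg_cong[where f="\<lambda>x. pr d x p"]) simp
    show ?thesis unfolding ff_def c_def e1 pr_Suc_front AA_Suc pe by simp
  qed
  have rn: "real n = real l + real p + 1" using n by simp
  have "ff d m k (Suc n) (Suc l) - (m + real n + 1 - k) * (1 - (m + real n + k) * d) * ff d m k n (Suc l)
   - (GG d m k n (Suc l) - GG d m k n l)
   = (-1)^l * X * (k - real l) * (1 - (k - 1 + real l) * d) * (m + 1 + real p) * d * (real (Suc p) * c - real (Suc l) * c1)"
    unfolding GG_def A1 A2 A3 rn X_def by (simp add: algebra_simps)
  then show ?thesis using key by simp
qed


lemma core: "(\<Sum>i\<le>n. ff d m k n i) = falling (m + real n - k) n * pr d (m + k) n"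
proof (induction n)
  case 0
  then show ?case by (simp add: ff_def falling_def pr_def AA_def)
next
  case (Suc n)
  define \<rho> where "\<rho> = (m + real n + 1 - k) * (1 - (m + real n + k) * d)"
  have z: "ff d m k n (Suc n) = 0" by (simp add: ff_def binomial_eq_0)
  have "(\<Sum>i\<le>Suc n. ff d m k (Suc n) i - \<rho> * ff d m k n i)
      = (ff d m k (Suc n) 0 - \<rho> * ff d m k n 0) + (\<Sum>l\<le>n. ff d m k (Suc n) (Suc l) - \<rho> * ff d m k n (Suc l))"
    by (rule sum.atMost_Suc_shift)
  also have "\<dots> = GG d m k n 0 + (\<Sum>l<Suc n. GG d m k n (Suc l) - GG d m k n l)"
    using step0[of d m k n] stepSuc[of _ n d m k] unfolding \<rho>_def GG_def lessThan_Suc_atMost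
    by (simp add: GG_def)
  also have "\<dots> = GG d m k n (Suc n)" by (simp add: sum_lessThan_telescope)
  also have "\<dots> = 0" by (simp add: GG_def z)
  finally have "(\<Sum>i\<le>Suc n. ff d m k (Suc n) i) = \<rho> * (\<Sum>i\<le>Suc n. ff d m k n i)"
    by (simp only: sum_subtractf sum_distrib_left)
  also have "\<dots> = \<rho> * (\<Sum>i\<le>n. ff d m k n i)" by (simp add: z)
  also have "\<dots> = falling (m + real (Suc n) - k) (Suc n) * pr d (m + k) (Suc n)"
    unfolding Suc.IH \<rho>_def falling_Suc_front pr_Suc
    by (simp add: algebra_simps)
  finally show ?case .
qed


lemma prod_int_range: "(\<Prod>j\<in>{a..a + int l - 1}. h j) = (\<Prod>t<l. h (a + int t))"
proof (induction l)
  case 0 then show ?case by simp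
next
  case (Suc l)
  have e: "{a..a + int (Suc l) - 1} = insert (a + int l) {a..a + int l - 1}" by auto
  show ?case unfolding e by (simp add: Suc.IH mult.commute)
qed

lemma PI: assumes "b = a + int l - 1"
  shows "(\<Prod>j\<in>{a..b}. 1 - of_int j * d) = pr d (of_int a) l"
  unfolding assms prod_int_range pr_def by simp

lemma pr_pos: "a \<ge> 0 \<Longrightarrow> d \<le> 0 \<Longrightarrow> pr d a l > 0"
  unfolding pr_def
  by (rule prod_pos) (smt (verit, ccfv_SIG) mult_nonneg_nonpos of_nat_0_le_iff)

lemma AA_pos: "m \<ge> 0 \<Longrightarrow> AA m p > 0"
  unfolding AA_def by (rule prod_pos) simp

lemma fall_pos: "i \<le> n \<Longrightarrow> falling (real (m + n)) i > 0"
  unfolding falling_def by (rule prod_pos) auto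

theorem lemmaC1:
  fixes m n k :: nat and \<delta> :: real
  assumes "\<delta> \<le> 0"
  shows "(\<Sum>i=0..n. (-1)^i * real (n choose i)
            * (falling (real k) i / falling (real (m + n)) i)
            * ((\<Prod>j\<in>{int k - 1 .. int k + int i - 2}. 1 - of_int j * \<delta>)
               / (\<Prod>j\<in>{int m .. int m + int i - 1}. 1 - of_int j * \<delta>)))
       = (falling (real (m + n) - real k) n
            * (\<Prod>j\<in>{int m + int k .. int m + int n + int k - 1}. 1 - of_int j * \<delta>))
         / (falling (real (m + n)) n
            * (\<Prod>j\<in>{int m .. int m + int n - 1}. 1 - of_int j * \<delta>))"
proof -
  define D where "D = falling (real (m + n)) n * pr \<delta> (real m) n"
  have Dpos: "D > 0" unfolding D_def using fall_pos[of n n m] pr_pos[of "real m" \<delta> n] assms by simp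
  have tm: "(-1)^i * real (n choose i)
            * (falling (real k) i / falling (real (m + n)) i)
            * ((\<Prod>j\<in>{int k - 1 .. int k + int i - 2}. 1 - of_int j * \<delta>)
               / (\<Prod>j\<in>{int m .. int m + int i - 1}. 1 - of_int j * \<delta>))
       = ff \<delta> (real m) (real k) n i / D" if i: "i \<in> {0..n}" for i
  proof -
    have i': "i \<le> n" using i by simp
    have p1: "(\<Prod>j\<in>{int k - 1 .. int k + int i - 2}. 1 - of_int j * \<delta>) = pr \<delta> (real k - 1) i"
      using PI[of "int k + int i - 2" "int k - 1" i \<delta>] by simp
    have p2: "(\<Prod>j\<in>{int m .. int m + int i - 1}. 1 - of_int j * \<delta>) = pr \<delta> (real m) i"
      using PI[of "int m + int i - 1" "int m" i \<delta>] by simp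
    have ni: "n = i + (n - i)" using i' by simp
    have fD: "falling (real (m + n)) n = falling (real (m + n)) i * AA (real m) (n - i)"
    proof -
      have a: "falling (real (m + n)) (i + (n - i)) = falling (real (m+n)) i * falling (real (m+n) - real i) (n - i)"
        by (rule falling_add)
      have b: "real (m+n) - real i = real m + real (n - i)" using i' by simp
      show ?thesis using a ni unfolding b falling_AA by simp
    qed
    have pD: "pr \<delta> (real m) n = pr \<delta> (real m) i * pr \<delta> (real m + real i) (n - i)"
      using pr_add[of \<delta> "real m" i "n - i"] ni by simp
    have nz: "falling (real (m + n)) i \<noteq> 0" "AA (real m) (n - i) \<noteq> 0"
         "pr \<delta> (real m) i \<noteq> 0" "pr \<delta> (real m + real i) (n - i) \<noteq> 0"
      using fall_pos[OF i', of m] AA_pos[of "real m" "n - i"] pr_pos[of "real m" \<delta> i]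
            pr_pos[of "real m + real i" \<delta> "n - i"] assms by auto
    show ?thesis unfolding p1 p2 D_def fD pD ff_def using nz
      by (simp add: field_simps)
  qed
  have "(\<Sum>i=0..n. (-1)^i * real (n choose i)
            * (falling (real k) i / falling (real (m + n)) i)
            * ((\<Prod>j\<in>{int k - 1 .. int k + int i - 2}. 1 - of_int j * \<delta>)
               / (\<Prod>j\<in>{int m .. int m + int i - 1}. 1 - of_int j * \<delta>)))
       = (\<Sum>i=0..n. ff \<delta> (real m) (real k) n i / D)"
    by (rule sum.cong[OF refl]) (rule tm)
  also have "\<dots> = (\<Sum>i\<le>n. ff \<delta> (real m) (real k) n i) / D"
    by (simp add: sum_divide_distrib atLeast0AtMost)
  also have "\<dots> = falling (real m + real n - real k) n * pr \<delta> (real m + real k) n / D"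
    by (simp add: core)
  also have "\<dots> = (falling (real (m + n) - real k) n
            * (\<Prod>j\<in>{int m + int k .. int m + int n + int k - 1}. 1 - of_int j * \<delta>))
         / (falling (real (m + n)) n
            * (\<Prod>j\<in>{int m .. int m + int n - 1}. 1 - of_int j * \<delta>))"
  proof -
    have q1: "(\<Prod>j\<in>{int m + int k .. int m + int n + int k - 1}. 1 - of_int j * \<delta>) = pr \<delta> (real m + real k) n"
      using PI[of "int m + int n + int k - 1" "int m + int k" n \<delta>] by simp
    have q2: "(\<Prod>j\<in>{int m .. int m + int n - 1}. 1 - of_int j * \<delta>) = pr \<delta> (real m) n"
      using PI[of "int m + int n - 1" "int m" n \<delta>] by simp
    show ?thesis unfolding q1 q2 D_def by simp
  qed
  finally show ?thesis .
qed

end
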